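(* Let $A$ and $B$ be C$^*$-algebras, where $A$ is unital with unit $1$. Let $p$ be a projection in $A$ and let $T:A\to B$ be a linear map which is a $^*$-homomorphism at $p$ and at $1-p$. Then $T$ is a Jordan $^*$-homomorphism.
   Context: A map $T:A\to B$ between C$^*$-algebras is a $^*$-homomorphism at $z\in A$ if for all $a,b\in A$ with $ab^*=z$ one has $T(ab^* )=T(a)T(b)^*=T(z)$, and for all $c,d\in A$ with $c^*d=z$ one has $T(c^*d)=T(c)^*T(d)=T(z)$. A Jordan $^*$-homomorphism is a linear map $T$ with $T(a\circ b)=T(a)\circ T(b)$ for all $a,b$, where $a\circ b=\frac12(ab+ba)$, and $T(x^* )=T(x)^*$ for all $x$. *)

theory Defs
  imports "HOL-Analysis.Analysis"
begin

text \<open>Complex Banach *-algebras satisfying the C*-identity (C*-algebras).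
  The real scalar multiplication coming from the library is required to be the
  restriction of the complex one.\<close>

class cstar_algebra = real_normed_algebra + banach +
  fixes scaleC :: "complex \<Rightarrow> 'a \<Rightarrow> 'a"
    and adj :: "'a \<Rightarrow> 'a"
  assumes scaleC_add_right: "scaleC c (x + y) = scaleC c x + scaleC c y"
    and scaleC_add_left: "scaleC (c + d) x = scaleC c x + scaleC d x"
    and scaleC_scaleC: "scaleC c (scaleC d x) = scaleC (c * d) x"
    and scaleC_one: "scaleC 1 x = x"
    and scaleR_scaleC: "scaleR r x = scaleC (of_real r) x"
    and scaleC_mult_left: "scaleC c x * y = scaleC c (x * y)"
    and scaleC_mult_right: "x * scaleC c y = scaleC c (x * y)"
    and norm_scaleC: "norm (scaleC c x) = cmod c * norm x"
    and adj_adj: "adj (adj x) = x"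
    and adj_add: "adj (x + y) = adj x + adj y"
    and adj_scaleC: "adj (scaleC c x) = scaleC (cnj c) (adj x)"
    and adj_mult: "adj (x * y) = adj y * adj x"
    and cstar_identity: "norm (adj x * x) = (norm x)\<^sup>2"

class cstar_algebra_1 = cstar_algebra + ring_1

definition complex_linear :: "('a::cstar_algebra \<Rightarrow> 'b::cstar_algebra) \<Rightarrow> bool" where
  "complex_linear T \<longleftrightarrow>
     (\<forall>x y. T (x + y) = T x + T y) \<and> (\<forall>c x. T (scaleC c x) = scaleC c (T x))"

definition is_projection :: "'a::cstar_algebra \<Rightarrow> bool" where
  "is_projection p \<longleftrightarrow> adj p = p \<and> p * p = p"

definition star_hom_at :: "('a::cstar_algebra \<Rightarrow> 'b::cstar_algebra) \<Rightarrow> 'a \<Rightarrow> bool" where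
  "star_hom_at T z \<longleftrightarrow>
     (\<forall>a b. a * adj b = z \<longrightarrow> T (a * adj b) = T a * adj (T b) \<and> T a * adj (T b) = T z) \<and>
     (\<forall>c d. adj c * d = z \<longrightarrow> T (adj c * d) = adj (T c) * T d \<and> adj (T c) * T d = T z)"

definition jordan_prod :: "'a::cstar_algebra \<Rightarrow> 'a \<Rightarrow> 'a" where
  "jordan_prod a b = scaleC (1/2) (a * b + b * a)"

definition jordan_star_hom :: "('a::cstar_algebra \<Rightarrow> 'b::cstar_algebra) \<Rightarrow> bool" where
  "jordan_star_hom T \<longleftrightarrow> complex_linear T \<and>
     (\<forall>a b. T (jordan_prod a b) = jordan_prod (T a) (T b)) \<and>
     (\<forall>x. T (adj x) = adj (T x))"

end

theory Submission imports Defs "HOL-Computational_Algebra.Formal_Power_Series"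
begin


context cstar_algebra begin

lemma adj_zero [simp]: "adj 0 = 0"
  using adj_add[of 0 0] by simp

lemma adj_minus [simp]: "adj (- x) = - adj x"
  using adj_add[of x "- x"] by (simp add: eq_neg_iff_add_eq_0 add.commute)

lemma adj_diff [simp]: "adj (x - y) = adj x - adj y"
  using adj_add[of x "- y"] by simp

lemma adj_scaleR [simp]: "adj (scaleR r x) = scaleR r (adj x)"
  by (simp add: scaleR_scaleC adj_scaleC)

lemma norm_adj [simp]: "norm (adj x) = norm x"
proof -
  have le: "norm y \<le> norm (adj y)" for y
  proof (cases "y = 0")
    case True then show ?thesis by simp
  next
    case False
    have "(norm y)^2 \<le> norm (adj y) * norm y"
      using cstar_identity[of y] norm_mult_ineq[of "adj y" y] by simp
    then show ?thesis using False by (simp add: power2_eq_square)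
  qed
  show ?thesis using le[of x] le[of "adj x"] by (simp add: adj_adj)
qed

lemma adj_mult_self_zero: "adj z * z = 0 \<Longrightarrow> z = 0"
  using cstar_identity[of z] by simp

lemma mult_adj_self_zero: "z * adj z = 0 \<Longrightarrow> z = 0"
  using adj_mult_self_zero[of "adj z"] adj_adj[of z] by simp


lemma scaleC_zero_right [simp]: "scaleC c 0 = 0"
  using scaleC_add_right[of c 0 0] by simp

lemma scaleC_zero_left [simp]: "scaleC 0 x = 0"
  using scaleC_add_left[of 0 0 x] by simp

lemma scaleC_minus_right: "scaleC c (- x) = - scaleC c x"
  using scaleC_add_right[of c x "- x"] by (simp add: eq_neg_iff_add_eq_0 add.commute)

lemma scaleC_diff_right: "scaleC c (x - y) = scaleC c x - scaleC c y"
  using scaleC_add_right[of c x "- y"] by (simp add: scaleC_minus_right)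

lemma scaleC_minus_left: "scaleC (- c) x = - scaleC c x"
  using scaleC_add_left[of c "- c" x] by (simp add: eq_neg_iff_add_eq_0 add.commute)

lemma scaleC_diff_left: "scaleC (c - d) x = scaleC c x - scaleC d x"
  using scaleC_add_left[of c "- d" x] by (simp add: scaleC_minus_left)

end

context cstar_algebra_1 begin
lemma adj_one [simp]: "adj 1 = 1"
proof -
  have "adj 1 = adj 1 * adj (adj 1)" by (simp add: adj_adj)
  also have "\<dots> = adj (adj 1 * 1)" by (rule adj_mult[symmetric])
  also have "\<dots> = 1" by (simp add: adj_adj)
  finally show ?thesis .
qed

end

lemma norm_one_cstar: "norm (1::'a::cstar_algebra_1) = 1"
proof -
  have h0: "norm (1::'a) = (norm (1::'a))^2" using cstar_identity[of "1::'a"] by simp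
  have h: "norm (1::'a) * norm (1::'a) = norm (1::'a)"
    using h0 power2_eq_square[of "norm (1::'a)"] by linarith
  have nz: "norm (1::'a) \<noteq> 0" by simp
  show ?thesis using h nz mult_cancel_left2[of "norm (1::'a)" "norm (1::'a)"] by blast
qed

instance cstar_algebra_1 \<subseteq> real_normed_algebra_1
  by standard (rule norm_one_cstar)


lemma bounded_linear_adj: "bounded_linear (adj :: 'a::cstar_algebra \<Rightarrow> 'a)"
  by (rule bounded_linear_intro[where K=1]) (simp_all add: adj_add)

lemma neumann:
  fixes y :: "'a::{real_normed_algebra_1,banach}"
  assumes "norm y < 1"
  shows "\<exists>g. (1 - y) * g = 1 \<and> g * (1 - y) = 1"
proof -
  have sm: "summable (\<lambda>n. y ^ n)" using complete_algebra_summable_geometric[OF assms] .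
  define g where "g = (\<Sum>n. y ^ n)"
  have h1: "y * g = (\<Sum>n. y * y ^ n)" unfolding g_def using suminf_mult[OF sm, of y] by simp
  have h2: "g * y = (\<Sum>n. y * y ^ n)" unfolding g_def using suminf_mult2[OF sm, of y]
    by (simp add: power_commutes)
  have h3: "(\<Sum>n. y * y ^ n) = g - 1" unfolding g_def using suminf_split_head[OF sm] unfolding power_Suc by simp
  show ?thesis
  proof (rule exI[of _ g], rule conjI)
    show "(1 - y) * g = 1" by (simp add: left_diff_distrib h1 h3)
    show "g * (1 - y) = 1" by (simp add: right_diff_distrib h2 h3)
  qed
qed


lemma adj_power: "adj ((y::'a::cstar_algebra_1) ^ n) = adj y ^ n"
  by (induction n) (simp_all add: adj_mult power_commutes)

lemma gchoose_half_bound: "\<bar>(1/2::real) gchoose n\<bar> \<le> 1"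
proof (induction n)
  case 0 show ?case by simp
next
  case (Suc n)
  have e1: "fact (Suc n) * ((1/2::real) gchoose Suc n) = (\<Prod>i = 0..<Suc n. 1/2 - of_nat i)"
    by (rule gbinomial_mult_fact)
  have e2: "fact n * ((1/2::real) gchoose n) = (\<Prod>i = 0..<n. 1/2 - of_nat i)"
    by (rule gbinomial_mult_fact)
  have e4: "fact (Suc n) * ((1/2::real) gchoose Suc n) = (fact n * ((1/2) gchoose n)) * (1/2 - of_nat n)"
    using e1 e2 by (simp add: prod.atLeast0_lessThan_Suc)
  have "fact n * (of_nat (Suc n) * ((1/2::real) gchoose Suc n)) = fact n * (((1/2) gchoose n) * (1/2 - of_nat n))"
    using e4 unfolding fact_Suc by (simp add: mult_ac)
  hence e3: "of_nat (Suc n) * ((1/2::real) gchoose Suc n) = ((1/2) gchoose n) * (1/2 - of_nat n)"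
    by simp
  have "\<bar>of_nat (Suc n) * ((1/2::real) gchoose Suc n)\<bar> \<le> 1 * of_nat (Suc n)"
    unfolding e3 abs_mult
  proof (rule mult_mono)
    show "\<bar>1 / 2 - real n\<bar> \<le> real (Suc n)" by simp
  qed (use Suc.IH in auto)
  then show ?case by (simp add: abs_mult)
qed

lemma sqrt_exists:
  fixes y :: "'a::cstar_algebra_1"
  assumes sa: "adj y = y" and ny: "norm y < 1"
  shows "\<exists>k. adj k = k \<and> k * k = 1 - y \<and> (\<forall>z. z * y = y * z \<longrightarrow> z * k = k * z)"
proof -
  define c where "c n = ((1/2::real) gchoose n) * (-1)^n" for n
  define f where "f n = scaleR (c n) (y ^ n)" for n
  have cb: "\<bar>c n\<bar> \<le> 1" for n using gchoose_half_bound[of n] by (simp add: c_def abs_mult)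
  have nf: "norm (f n) \<le> norm y ^ n" for n
  proof -
    have "norm (f n) = \<bar>c n\<bar> * norm (y ^ n)" by (simp add: f_def)
    also have "\<dots> \<le> 1 * norm y ^ n"
      by (rule mult_mono) (use cb norm_power_ineq in auto)
    finally show ?thesis by simp
  qed
  have sn: "summable (\<lambda>n. norm (f n))"
    by (rule summable_comparison_test[OF _ summable_geometric[of "norm y"]]) (use nf ny in auto)
  have sf: "summable f" using sn by (rule summable_norm_cancel)
  define k where "k = suminf f"
  have "adj k = (\<Sum>n. adj (f n))" unfolding k_def by (rule bounded_linear.suminf[OF bounded_linear_adj sf])
  also have "(\<lambda>n. adj (f n)) = f" by (simp add: fun_eq_iff f_def adj_power sa)
  finally have ak: "adj k = k" by (simp add: k_def)
  have comm: "z * k = k * z" if zy: "z * y = y * z" for z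
  proof -
    have zp: "z * y ^ n = y ^ n * z" for n
      by (induction n) (simp_all add: mult.assoc[symmetric] zy, simp_all add: mult.assoc zy)
    have "z * k = (\<Sum>n. z * f n)" unfolding k_def by (rule suminf_mult[OF sf, symmetric])
    also have "\<dots> = (\<Sum>n. f n * z)" by (simp add: f_def zp)
    also have "\<dots> = k * z" unfolding k_def by (rule suminf_mult2[OF sf, symmetric])
    finally show ?thesis .
  qed
  have cp: "(\<lambda>n. \<Sum>i\<le>n. f i * f (n - i)) sums (k * k)"
    unfolding k_def by (rule Cauchy_product_sums[OF sn sn])
  have csum: "(\<Sum>i\<le>n. c i * c (n - i)) = (-1)^n * (1 gchoose n)" for n
  proof -
    have "(\<Sum>i\<le>n. c i * c (n - i)) = (\<Sum>i\<in>{0..n}. (-1)^n * (((1/2::real) gchoose i) * ((1/2) gchoose (n - i))))"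
      by (rule sum.cong) (auto simp: c_def power_add[symmetric])
    also have "\<dots> = (-1)^n * (\<Sum>i\<in>{0..n}. ((1/2::real) gchoose i) * ((1/2) gchoose (n - i)))"
      by (simp add: sum_distrib_left)
    also have "\<dots> = (-1)^n * ((1/2 + 1/2) gchoose n)" by (simp only: gbinomial_Vandermonde)
    finally show ?thesis by simp
  qed
  have termeq: "(\<Sum>i\<le>n. f i * f (n - i)) = scaleR ((-1)^n * (1 gchoose n)) (y ^ n)" for n
  proof -
    have "(\<Sum>i\<le>n. f i * f (n - i)) = (\<Sum>i\<le>n. scaleR (c i * c (n - i)) (y ^ n))"
      by (rule sum.cong) (auto simp: f_def power_add[symmetric])
    also have "\<dots> = scaleR (\<Sum>i\<le>n. c i * c (n - i)) (y ^ n)" by (simp add: scaleR_sum_left)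
    finally show ?thesis by (simp add: csum)
  qed
  have g1: "(1::real) gchoose n = 0" if "n \<ge> 2" for n
  proof -
    have "(1::real) gchoose n = of_nat (1 choose n)" using gbinomial_binomial[of 1 n]
      by (metis binomial_gbinomial of_nat_1)
    with that show ?thesis by simp
  qed
  have ds: "(\<lambda>n. scaleR ((-1)^n * ((1::real) gchoose n)) (y ^ n)) sums (1 - y)"
  proof -
    have "(\<lambda>n. scaleR ((-1)^n * ((1::real) gchoose n)) (y ^ n)) sums
           (\<Sum>n\<in>{0,1}. scaleR ((-1)^n * ((1::real) gchoose n)) (y ^ n))"
      by (rule sums_finite) (auto simp: g1)
    then show ?thesis by simp
  qed
  have kk: "k * k = 1 - y" using sums_unique2[OF cp[unfolded termeq] ds] .
  show ?thesis using ak kk comm by blast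
qed



lemma decomp:
  fixes x :: "'a::cstar_algebra"
  shows "\<exists>h1 h2. adj h1 = h1 \<and> adj h2 = h2 \<and> x = h1 + scaleC \<i> h2"
proof (intro exI conjI)
  show "adj (scaleC (1/2) (x + adj x)) = scaleC (1/2) (x + adj x)"
    by (simp add: adj_scaleC adj_add adj_adj add.commute)
  have "adj (scaleC (- \<i>/2) (x - adj x)) = scaleC (\<i>/2) (adj x - x)"
    by (simp add: adj_scaleC adj_adj)
  also have "\<dots> = scaleC (- \<i>/2) (x - adj x)"
    by (simp add: scaleC_diff_right scaleC_minus_left)
  finally show "adj (scaleC (- \<i>/2) (x - adj x)) = scaleC (- \<i>/2) (x - adj x)" .
  have "scaleC \<i> (scaleC (- \<i>/2) (x - adj x)) = scaleC (1/2) (x - adj x)"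
    by (simp add: scaleC_scaleC)
  then have "scaleC (1/2) (x + adj x) + scaleC \<i> (scaleC (- \<i>/2) (x - adj x))
      = scaleC (1/2) x + scaleC (1/2) x"
    by (simp add: scaleC_add_right scaleC_diff_right)
  also have "\<dots> = x" by (simp add: scaleC_add_left[symmetric] scaleC_one)
  finally show "x = scaleC (1/2) (x + adj x) + scaleC \<i> (scaleC (- \<i>/2) (x - adj x))" by simp
qed

definition Sm :: "('a::cstar_algebra \<Rightarrow> 'b::cstar_algebra) \<Rightarrow> 'a \<Rightarrow> 'b" where
  "Sm T y = adj (T (adj y))"

locale at1 =
  fixes T :: "'a::cstar_algebra_1 \<Rightarrow> 'b::cstar_algebra"
  assumes lin: "complex_linear T"
    and h1: "\<And>a c. a * c = 1 \<Longrightarrow> T a * Sm T c = T 1"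
    and h2: "\<And>a c. a * c = 1 \<Longrightarrow> Sm T a * T c = T 1"
begin

abbreviation "e \<equiv> T 1"

lemma T_add: "T (x + y) = T x + T y" using lin by (simp add: complex_linear_def)
lemma T_scaleC: "T (scaleC c x) = scaleC c (T x)" using lin by (simp add: complex_linear_def)
lemma T_zero: "T 0 = 0" using T_add[of 0 0] by simp
lemma T_minus: "T (- x) = - T x" using T_add[of x "- x"] T_zero by (simp add: eq_neg_iff_add_eq_0 add.commute)
lemma T_diff: "T (x - y) = T x - T y" using T_add[of x "- y"] T_minus by simp
lemma T_scaleR: "T (scaleR r x) = scaleR r (T x)" by (simp add: scaleR_scaleC T_scaleC)

lemma S_add: "Sm T (x + y) = Sm T x + Sm T y" by (simp add: Sm_def adj_add T_add)
lemma S_scaleC: "Sm T (scaleC c x) = scaleC c (Sm T x)" by (simp add: Sm_def adj_scaleC T_scaleC)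
lemma S_diff: "Sm T (x - y) = Sm T x - Sm T y" by (simp add: Sm_def T_diff)
lemma S_scaleR: "Sm T (scaleR r x) = scaleR r (Sm T x)" by (simp add: Sm_def T_scaleR)
lemma S_sa: "adj h = h \<Longrightarrow> Sm T h = adj (T h)" by (simp add: Sm_def)

lemma e_sa: "adj e = e"
proof -
  have "e * adj e = e" using h1[of 1 1] by (simp add: Sm_def)
  then have "adj e = adj (e * adj e)" by simp
  also have "\<dots> = e * adj e" by (simp add: adj_mult adj_adj)
  also have "\<dots> = e" using h1[of 1 1] by (simp add: Sm_def)
  finally show ?thesis .
qed

lemma ee: "e * e = e" using h1[of 1 1] e_sa by (simp add: Sm_def)

lemma unitary:
  assumes "u * adj u = 1" "adj u * u = 1"
  shows "T u = e * T u \<and> T u = T u * e \<and> T u * adj (T u) = e"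
proof -
  define U where "U = T u"
  have a: "U * adj U = e" using h1[OF assms(1)] by (simp add: Sm_def adj_adj U_def)
  have b: "adj U * U = e" using h2[OF assms(2)] by (simp add: Sm_def adj_adj U_def)
  have "(U - e * U) * adj (U - e * U) = U * adj U - (U * adj U) * e - e * (U * adj U) + e * (U * adj U) * e"
    by (simp add: adj_mult e_sa algebra_simps)
  also have "\<dots> = 0" by (simp add: a ee)
  finally have "U - e * U = 0" by (rule mult_adj_self_zero)
  then have 1: "U = e * U" by simp
  have "adj (U - U * e) * (U - U * e) = adj U * U - (adj U * U) * e - e * (adj U * U) + e * (adj U * U) * e"
    by (simp add: adj_mult e_sa algebra_simps)
  also have "\<dots> = 0" by (simp add: b ee)
  finally have "U - U * e = 0" by (rule adj_mult_self_zero)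
  then have 2: "U = U * e" by simp
  show ?thesis using 1 2 a by (simp add: U_def)
qed

definition good where "good x \<longleftrightarrow> T x = e * T x \<and> T x = T x * e"

lemma good_add: "good x \<Longrightarrow> good y \<Longrightarrow> good (x + y)"
  by (simp add: good_def T_add distrib_left distrib_right)

lemma good_scaleR: "good x \<Longrightarrow> good (scaleR r x)"
  by (simp add: good_def T_scaleR)

lemma good_scaleC: "good x \<Longrightarrow> good (scaleC c x)"
  by (simp add: good_def T_scaleC scaleC_mult_left scaleC_mult_right)

lemma good_sa:
  assumes sa: "adj h = h"
  shows "good h"
proof (cases "h = 0")
  case True then show ?thesis by (simp add: good_def T_zero)
next
  case False
  define r where "r = norm h"
  have r0: "r > 0" using False by (simp add: r_def)
  define h' where "h' = scaleR (1/(2*r)) h"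
  have nh': "norm h' = 1/2" using r0 by (simp add: h'_def r_def)
  have sa': "adj h' = h'" by (simp add: h'_def sa)
  have "norm (h' * h') \<le> norm h' * norm h'" by (rule norm_mult_ineq)
  then have n2: "norm (h' * h') < 1" using nh' by simp
  have "adj (h' * h') = h' * h'" by (simp add: adj_mult sa')
  then obtain k where k: "adj k = k" "k * k = 1 - h' * h'" "\<And>z. z * (h' * h') = (h' * h') * z \<Longrightarrow> z * k = k * z"
    using sqrt_exists[OF _ n2] by blast
  have hk: "h' * k = k * h'" using k(3)[of h'] by (simp add: mult.assoc)
  define u where "u = h' + scaleC \<i> k"
  have "adj u = adj h' + adj (scaleC \<i> k)" unfolding u_def by (rule adj_add)
  then have au: "adj u = h' - scaleC \<i> k" by (simp add: adj_scaleC sa' k(1) scaleC_minus_left)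
  have ii: "scaleC \<i> (scaleC \<i> z) = - z" for z :: 'a
    by (simp add: scaleC_scaleC scaleC_minus_left scaleC_one)
  have u1: "u * adj u = 1"
    unfolding au unfolding u_def
    apply (simp only: distrib_left distrib_right left_diff_distrib right_diff_distrib
        scaleC_mult_left scaleC_mult_right ii)
    apply (simp add: hk k(2) scaleC_add_right scaleC_diff_right ii)
    done
  have u2: "adj u * u = 1"
    unfolding au unfolding u_def
    apply (simp only: distrib_left distrib_right left_diff_distrib right_diff_distrib
        scaleC_mult_left scaleC_mult_right ii)
    apply (simp add: hk k(2) scaleC_add_right scaleC_diff_right ii)
    done
  have gu: "good u" using unitary[OF u1 u2] by (simp add: good_def)
  have gau: "good (adj u)" using unitary[of "adj u"] u1 u2 by (simp add: good_def adj_adj)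
  have "u + adj u = scaleR 2 h'" unfolding au unfolding u_def by (simp add: scaleR_2 algebra_simps)
  then have "h = scaleR r (u + adj u)"
    using r0 by (simp add: h'_def)
  then show ?thesis using good_scaleR[OF good_add[OF gu gau]] by simp
qed

lemma good_all: "good x"
proof -
  obtain h1 h2 where "adj h1 = h1" "adj h2 = h2" "x = h1 + scaleC \<i> h2" using decomp by blast
  then show ?thesis using good_add good_scaleC good_sa by metis
qed

lemma eT: "e * T x = T x" and Te: "T x * e = T x"
  using good_all[of x] by (simp_all add: good_def)

end
lemma (in at1) square: "T (x * x) = T x * T x"
proof -
  define t :: real where "t = 1 / (2 * (norm x + 1))"
  have t0: "t > 0" unfolding t_def by (smt (verit) norm_ge_zero divide_pos_pos)
  have ntx: "norm (scaleR t x) < 1"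
  proof -
    have n1: "norm (scaleR t x) = t * norm x" using t0 by simp
    have d: "2 * (norm x + 1) > 0" by (smt (verit) norm_ge_zero)
    have "t * norm x = norm x / (2 * (norm x + 1))" by (simp add: t_def)
    also have "\<dots> < 1" using d by (simp add: divide_less_eq)
    finally show ?thesis using t0 by simp
  qed
  have ntx': "norm (scaleR (-t) x) < 1" using ntx by simp
  obtain g1 where g1: "(1 - scaleR (-t) x) * g1 = 1" "g1 * (1 - scaleR (-t) x) = 1"
    using neumann[OF ntx'] by blast
  obtain g2 where g2: "(1 - scaleR t x) * g2 = 1" "g2 * (1 - scaleR t x) = 1"
    using neumann[OF ntx] by blast
  define a1 where "a1 = 1 + scaleR t x"
  define a2 where "a2 = 1 - scaleR t x"
  have a1g1: "a1 * g1 = 1" "g1 * a1 = 1" using g1 by (simp_all add: a1_def)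
  have a2g2: "a2 * g2 = 1" "g2 * a2 = 1" using g2 by (simp_all add: a2_def)
  have a12: "a1 * a2 = a2 * a1" by (simp add: a1_def a2_def algebra_simps)
  have aa: "a1 * a2 = 1 - scaleR (t*t) (x * x)" by (simp add: a1_def a2_def algebra_simps)
  have ac: "(a1 * a2) * scaleR (1/2) (g1 + g2) = 1"
  proof -
    have "(a1 * a2) * g1 = a2" by (simp add: a12 mult.assoc a1g1)
    moreover have "(a1 * a2) * g2 = a1" by (simp add: mult.assoc a2g2)
    ultimately have "(a1 * a2) * (g1 + g2) = a1 + a2" by (simp add: distrib_left add.commute)
    also have "\<dots> = scaleR 2 1" by (simp add: a1_def a2_def scaleR_2)
    finally show ?thesis by (simp add: mult_scaleR_right)
  qed
  define X where "X = T x"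
  define X2 where "X2 = T (x * x)"
  define H1 where "H1 = Sm T g1"
  define H2 where "H2 = Sm T g2"
  define P where "P = e + scaleR t X"
  define Q where "Q = e - scaleR t X"
  have TP: "T a1 = P" by (simp add: a1_def P_def T_add T_scaleR X_def)
  have TQ: "T a2 = Q" by (simp add: a2_def Q_def T_diff T_scaleR X_def)
  have PH1: "P * H1 = e" using h1[OF a1g1(1)] by (simp add: TP H1_def)
  have H1P: "H1 * P = e" using h2[OF a1g1(2)] by (simp add: TP H1_def)
  have QH2: "Q * H2 = e" using h1[OF a2g2(1)] by (simp add: TQ H2_def)
  have H2Q: "H2 * Q = e" using h2[OF a2g2(2)] by (simp add: TQ H2_def)
  have eX: "e * X = X" "X * e = X" by (simp_all add: X_def eT Te)
  have eX2: "e * X2 = X2" "X2 * e = X2" by (simp_all add: X2_def eT Te)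
  have PQ: "P * Q = e - scaleR (t*t) (X * X)"
    by (simp add: P_def Q_def algebra_simps eX ee)
  have QP: "Q * P = e - scaleR (t*t) (X * X)"
    by (simp add: P_def Q_def algebra_simps eX ee)
  define D where "D = X2 - X * X"
  have Ta: "T (1 - scaleR (t*t) (x * x)) = P * Q - scaleR (t*t) D"
    by (simp add: PQ D_def T_diff T_scaleR X2_def algebra_simps)
  have R: "(P * Q - scaleR (t*t) D) * scaleR (1/2) (H1 + H2) = e"
    using h1[OF ac] unfolding aa Ta by (simp add: S_scaleR S_add H1_def H2_def)
  have "(P * Q) * (H1 + H2) = scaleR 2 e"
  proof -
    have "(P * Q) * H1 = Q * e" by (simp add: QP[symmetric] mult.assoc PH1 PQ)
    moreover have "(P * Q) * H2 = P * e" by (simp add: mult.assoc QH2)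
    ultimately show ?thesis by (simp add: distrib_left P_def Q_def algebra_simps ee eX scaleR_2)
  qed
  with R have "scaleR (1/2) (scaleR 2 e - scaleR (t*t) (D * (H1 + H2))) = e"
    by (simp add: left_diff_distrib mult_scaleR_right)
  then have "e - scaleR (1/2) (scaleR (t*t) (D * (H1 + H2))) = e"
    by (simp only: scaleR_diff_right scaleR_scaleR) simp
  then have "scaleR (1/2) (scaleR (t*t) (D * (H1 + H2))) = 0" by simp
  then have "scaleR (t*t) (D * (H1 + H2)) = 0" by (simp only: scaleR_eq_0_iff) simp
  then have DH: "D * (H1 + H2) = 0" using t0 by simp
  have "(H1 + H2) * (P * Q) = scaleR 2 e"
  proof -
    have "H1 * (P * Q) = e * Q" by (simp add: mult.assoc[symmetric] H1P)
    moreover have "H2 * (P * Q) = e * P" by (simp add: PQ QP[symmetric] mult.assoc[symmetric] H2Q)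
    ultimately show ?thesis by (simp add: distrib_right P_def Q_def algebra_simps ee eX scaleR_2)
  qed
  then have "D * scaleR 2 e = 0" using DH by (metis mult.assoc mult_zero_left)
  then have "D * e = 0" by (simp add: mult_scaleR_right)
  moreover have "D * e = D" by (simp add: D_def left_diff_distrib eX eX2 mult.assoc)
  ultimately show ?thesis by (simp add: D_def X_def X2_def)
qed

lemma (in at1) sa:
  assumes sah: "adj h = h"
  shows "adj (T h) = T h"
proof -
  define t :: real where "t = 1 / (2 * (norm h + 1))"
  have t0: "t > 0" unfolding t_def by (smt (verit) norm_ge_zero divide_pos_pos)
  define c where "c = \<i> * complex_of_real t"
  have c0: "c \<noteq> 0" using t0 by (simp add: c_def)
  have cc: "cnj c = - c" by (simp add: c_def)
  define y where "y = scaleC c h"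
  have ny: "norm y < 1"
  proof -
    have n1: "norm y = t * norm h" using t0 by (simp add: y_def norm_scaleC c_def norm_mult)
    have d: "2 * (norm h + 1) > 0" by (smt (verit) norm_ge_zero)
    have "t * norm h = norm h / (2 * (norm h + 1))" by (simp add: t_def)
    also have "\<dots> < 1" using d by (simp add: divide_less_eq)
    finally show ?thesis using n1 by linarith
  qed
  obtain g where g: "(1 - y) * g = 1" "g * (1 - y) = 1" using neumann[OF ny] by blast
  define a where "a = 1 - y"
  define a' where "a' = 1 + y"
  have ay: "adj y = - y" by (simp add: y_def adj_scaleC cc sah scaleC_minus_left)
  have aa: "adj a = a'" by (simp add: a_def a'_def ay)
  have ag: "a * g = 1" "g * a = 1" using g by (simp_all add: a_def)
  have ag': "a' * adj g = 1" "adj g * a' = 1"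
    using arg_cong[OF ag(2), of adj] arg_cong[OF ag(1), of adj] by (simp_all add: adj_mult aa)
  have comm: "a * a' = a' * a" by (simp add: a_def a'_def algebra_simps)
  have ga': "g * a' = a' * g"
  proof -
    have "g * a' = g * a' * (a * g)" by (simp add: ag)
    also have "\<dots> = g * (a' * a) * g" by (simp add: mult.assoc)
    also have "\<dots> = g * (a * a') * g" by (simp add: comm)
    also have "\<dots> = (g * a) * (a' * g)" by (simp add: mult.assoc)
    finally show ?thesis by (simp add: ag)
  qed
  have g'a: "adj g * a = a * adj g"
  proof -
    have "adj g * a = adj g * a * (a' * adj g)" by (simp add: ag')
    also have "\<dots> = adj g * (a * a') * adj g" by (simp add: mult.assoc)
    also have "\<dots> = adj g * (a' * a) * adj g" by (simp add: comm)
    also have "\<dots> = (adj g * a') * (a * adj g)" by (simp add: mult.assoc)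
    finally show ?thesis by (simp add: ag')
  qed
  define u where "u = a' * g"
  have aa': "adj a' = a" using arg_cong[OF aa, of adj] by (simp add: adj_adj)
  have au: "adj u = adj g * a" by (simp add: u_def adj_mult aa')
  have u1: "u * adj u = 1"
  proof -
    have "u * adj u = a' * g * (a * adj g)" unfolding au unfolding u_def g'a by (rule refl)
    also have "\<dots> = a' * adj g" by (simp add: mult.assoc[symmetric], simp add: mult.assoc ag)
    finally show ?thesis by (simp add: ag')
  qed
  have u2: "adj u * u = 1"
  proof -
    have "adj u * u = adj g * (a * a') * g" unfolding au unfolding u_def by (simp add: mult.assoc)
    also have "\<dots> = (adj g * a') * (a * g)" by (simp add: comm mult.assoc)
    finally show ?thesis by (simp add: ag ag')
  qed
  have ueq: "u = g + g - 1"
  proof -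
    have "a' = 1 + 1 - a" by (simp add: a_def a'_def)
    then have "u = (1 + 1 - a) * g" by (simp only: u_def)
    also have "\<dots> = g + g - a * g" by (simp only: left_diff_distrib distrib_right mult_1_left)
    finally show ?thesis by (simp only: ag)
  qed
  define G where "G = T g"
  define X where "X = T h"
  have TU: "T u = G + G - e" by (simp add: ueq T_add T_diff G_def)
  have UU: "(G + G - e) * adj (G + G - e) = e" using unitary[OF u1 u2] TU by simp
  define V where "V = scaleC c (adj X)"
  define W where "W = scaleC (- c) X"
  have VW: "adj V = W" by (simp add: V_def W_def adj_scaleC cc adj_adj)
  have Sa: "Sm T a = e - V"
  proof -
    have "Sm T a = Sm T 1 - scaleC c (Sm T h)" by (simp only: a_def S_diff y_def S_scaleC)
    moreover have "Sm T 1 = e" by (simp add: Sm_def e_sa)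
    moreover have "Sm T h = adj X" by (simp add: S_sa[OF sah] X_def)
    ultimately show ?thesis by (simp add: V_def)
  qed
  have PG: "(e - V) * G = e" using h2[OF ag(1)] by (simp add: Sa G_def)
  have GQ: "adj G * (e - W) = e" using arg_cong[OF PG, of adj] by (simp add: adj_mult VW e_sa)
  have eG: "e * G = G" "G * e = G" by (simp_all add: G_def eT Te)
  have eaG: "e * adj G = adj G" "adj G * e = adj G"
    using arg_cong[OF eG(2), of adj] arg_cong[OF eG(1), of adj] by (simp_all add: adj_mult e_sa)
  have eX: "e * X = X" "X * e = X" by (simp_all add: X_def eT Te)
  have Ve: "V * e = V"
    using arg_cong[OF eX(1), of adj] by (simp add: V_def scaleC_mult_left adj_mult e_sa)
  have eW: "e * W = W" by (simp add: W_def scaleC_mult_right eX)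
  have Pe: "(e - V) * e = e - V" by (simp add: left_diff_distrib ee Ve)
  have L: "(e - V) * ((G + G - e) * adj (G + G - e)) * (e - W) = (e + V) * (e + W)"
  proof -
    have f1: "(e - V) * (G + G - e) = e + V"
      by (simp add: distrib_left right_diff_distrib PG Pe)
    have eQ: "e * (e - W) = e - W" by (simp add: right_diff_distrib ee eW)
    have f2: "adj (G + G - e) * (e - W) = e + W"
      by (simp add: adj_add e_sa distrib_right left_diff_distrib GQ eQ)
    have "(e - V) * ((G + G - e) * adj (G + G - e)) * (e - W)
        = ((e - V) * (G + G - e)) * (adj (G + G - e) * (e - W))" by (simp only: mult.assoc)
    then show ?thesis by (simp only: f1 f2)
  qed
  have Rr: "(e - V) * ((G + G - e) * adj (G + G - e)) * (e - W) = (e - V) * (e - W)"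
    by (simp only: UU Pe)
  have "(e + V) * (e + W) = (e - V) * (e - W)" using L Rr by simp
  then have "V + W + (V + W) = 0"
    by (simp add: algebra_simps ee Ve eW)
  then have "V + W = 0" by (simp add: scaleR_2[symmetric])
  then have "scaleC c (adj X - X) = 0"
    by (simp add: V_def W_def scaleC_diff_right scaleC_minus_left)
  then have "scaleC (1/c) (scaleC c (adj X - X)) = 0" by simp
  then have "adj X - X = 0" using c0 by (simp add: scaleC_scaleC scaleC_one)
  then show ?thesis by (simp add: X_def)
qed

lemma (in at1) jordan: "jordan_star_hom T"
  unfolding jordan_star_hom_def
proof (intro conjI allI)
  show "complex_linear T" by (rule lin)
  fix a b :: 'a
  have eq: "a * b + b * a = (a + b) * (a + b) - a * a - b * b" by (simp add: algebra_simps)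
  have "T (a * b + b * a) = T ((a + b) * (a + b)) - T (a * a) - T (b * b)"
    unfolding eq by (simp only: T_diff)
  also have "\<dots> = (T a + T b) * (T a + T b) - T a * T a - T b * T b"
    by (simp only: square T_add)
  also have "\<dots> = T a * T b + T b * T a" by (simp add: algebra_simps)
  finally have "T (a * b + b * a) = T a * T b + T b * T a" .
  then show "T (jordan_prod a b) = jordan_prod (T a) (T b)"
    by (simp add: jordan_prod_def T_scaleC)
next
  fix x :: 'a
  obtain h1 h2 where hh: "adj h1 = h1" "adj h2 = h2" "x = h1 + scaleC \<i> h2" using decomp by blast
  have "T (adj x) = T h1 + scaleC (- \<i>) (T h2)"
    by (simp add: hh adj_add adj_scaleC T_add T_scaleC)
  also have "\<dots> = adj (T x)"
    by (simp add: hh T_add T_scaleC adj_add adj_scaleC sa)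
  finally show "T (adj x) = adj (T x)" .
qed


lemma Sm_add: "complex_linear T \<Longrightarrow> Sm T (x + y) = Sm T x + Sm T y"
  by (simp add: Sm_def adj_add complex_linear_def)

lemma reduce_one:
  fixes T :: "'a::cstar_algebra_1 \<Rightarrow> 'b::cstar_algebra" and p :: 'a
  assumes pp: "p * p = p" and lin: "complex_linear T"
    and hp: "star_hom_at T p" and hq: "star_hom_at T (1 - p)"
    and ac: "a * c = 1"
  shows "T a * Sm T c = T 1 \<and> Sm T a * T c = T 1"
proof -
  define q where "q = 1 - p"
  have qq: "q * q = q" by (simp add: q_def algebra_simps pp)
  have pq: "p * q = 0" "q * p = 0" by (simp_all add: q_def algebra_simps pp)
  have Tadd: "T (x + y) = T x + T y" for x y using lin by (simp add: complex_linear_def)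
  have pq1: "p + q = 1" by (simp add: q_def)
  have e1: "(p * a) * (c * p) = p"
  proof -
    have "(p * a) * (c * p) = p * ((a * c) * p)" by (simp only: mult.assoc)
    then show ?thesis by (simp add: ac pp)
  qed
  have e2: "(p * a) * (c * p + c * q) = p"
  proof -
    have "(p * a) * (c * p + c * q) = p * (a * c) * (p + q)" by (simp only: distrib_left[symmetric] mult.assoc)
    then show ?thesis by (simp add: ac pq1 pp)
  qed
  have e3: "(q * a) * (c * q) = q"
  proof -
    have "(q * a) * (c * q) = q * ((a * c) * q)" by (simp only: mult.assoc)
    then show ?thesis by (simp add: ac qq)
  qed
  have e4: "(q * a) * (c * q + c * p) = q"
  proof -
    have "(q * a) * (c * q + c * p) = q * (a * c) * (q + p)" by (simp only: distrib_left[symmetric] mult.assoc)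
    then show ?thesis using pq1 by (simp add: ac qq add.commute)
  qed
  have hq': "star_hom_at T q" using hq by (simp only: q_def)
  have hpA: "T x * adj (T y) = T p" if "x * adj y = p" for x y
    using conjunct1[OF hp[unfolded star_hom_at_def], rule_format, of x y] that by blast
  have hpB: "adj (T x) * T y = T p" if "adj x * y = p" for x y
    using conjunct2[OF hp[unfolded star_hom_at_def], rule_format, of x y] that by blast
  have hqA: "T x * adj (T y) = T q" if "x * adj y = q" for x y
    using conjunct1[OF hq'[unfolded star_hom_at_def], rule_format, of x y] that by blast
  have hqB: "adj (T x) * T y = T q" if "adj x * y = q" for x y
    using conjunct2[OF hq'[unfolded star_hom_at_def], rule_format, of x y] that by blast
  have A1: "T (p * a) * Sm T (c * p) = T p"
    unfolding Sm_def by (rule hpA) (simp add: adj_adj e1)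
  have A2: "T (p * a) * Sm T (c * p + c * q) = T p"
    unfolding Sm_def by (rule hpA) (simp add: adj_adj e2)
  have A3: "T (q * a) * Sm T (c * q) = T q"
    unfolding Sm_def by (rule hqA) (simp add: adj_adj e3)
  have A4: "T (q * a) * Sm T (c * q + c * p) = T q"
    unfolding Sm_def by (rule hqA) (simp add: adj_adj e4)
  have A2': "T (p * a) * Sm T (c * q) = 0" using A1 A2 by (simp add: Sm_add[OF lin] distrib_left)
  have A4': "T (q * a) * Sm T (c * p) = 0" using A3 A4 by (simp add: Sm_add[OF lin] distrib_left)
  have B1: "Sm T (p * a) * T (c * p) = T p"
    unfolding Sm_def by (rule hpB) (simp add: adj_adj e1)
  have B2: "Sm T (p * a) * T (c * p + c * q) = T p"
    unfolding Sm_def by (rule hpB) (simp add: adj_adj e2)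
  have B3: "Sm T (q * a) * T (c * q) = T q"
    unfolding Sm_def by (rule hqB) (simp add: adj_adj e3)
  have B4: "Sm T (q * a) * T (c * q + c * p) = T q"
    unfolding Sm_def by (rule hqB) (simp add: adj_adj e4)
  have B2': "Sm T (p * a) * T (c * q) = 0" using B1 B2 by (simp add: Tadd distrib_left)
  have B4': "Sm T (q * a) * T (c * p) = 0" using B3 B4 by (simp add: Tadd distrib_left)
  have aa: "a = p * a + q * a" by (simp only: distrib_right[symmetric] pq1 mult_1_left)
  have cc: "c = c * p + c * q" by (simp only: distrib_left[symmetric] pq1 mult_1_right)
  have one: "T 1 = T p + T q" by (simp only: pq1[symmetric] Tadd)
  have "T a * Sm T c = (T (p * a) + T (q * a)) * (Sm T (c * p) + Sm T (c * q))"
    by (subst aa, subst cc, simp only: Tadd Sm_add[OF lin])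
  also have "\<dots> = T 1" by (simp add: distrib_left distrib_right A1 A2' A3 A4' one)
  finally have X: "T a * Sm T c = T 1" .
  have "Sm T a * T c = (Sm T (p * a) + Sm T (q * a)) * (T (c * p) + T (c * q))"
    by (subst aa, subst cc, simp only: Tadd Sm_add[OF lin])
  also have "\<dots> = T 1" by (simp add: distrib_left distrib_right B1 B2' B3 B4' one)
  finally show ?thesis using X by simp
qed

theorem corollary2p12:
  fixes T :: "'a::cstar_algebra_1 \<Rightarrow> 'b::cstar_algebra"
    and p :: 'a
  assumes "is_projection p"
    and "complex_linear T"
    and "star_hom_at T p"
    and "star_hom_at T (1 - p)"
  shows "jordan_star_hom T"
proof -
  have pp: "p * p = p" using assms(1) by (simp add: is_projection_def)
  interpret at1 T
    by unfold_locales (use reduce_one[OF pp assms(2-4)] assms(2) in auto)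
  show ?thesis by (rule jordan)
qed

end
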